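(* Let $\mathcal M$ be a local Moufang set with basis $(0,\infty)$ and let $x\in X$ be a unit. Then there is a unique element $\mu_x\in U_0\alpha_xU_0$ with $0\mu_x=\infty$ and $\infty\mu_x=0$. Moreover $\mu_x=g\alpha_xh$, where $g$ is the unique element of $U_0$ mapping $\infty$ to $-x$ and $h$ is the unique element of $U_0$ mapping $x$ to $\infty$; in particular $g,h\in U_0^\times:=\{u\in U_0\mid \overline u\neq \mathrm{id}\}$.
   Context: Group actions are right actions, written $xg$; conjugation is $g^h=h^{-1}gh$. For a set $X$ with an equivalence relation $\sim$, $\overline{x}$ denotes the class of $x$, $\overline X$ the set of classes, and $\mathrm{Sym}(X,\sim)$ the group of bijections $g$ of $X$ with $x\sim y\iff xg\sim yg$; each such $g$ induces a permutation $\overline g$ of $\overline X$, and for a subgroup $U\le \mathrm{Sym}(X,\sim)$, $\overline U$ is the induced group of permutations of $\overline X$. A local Moufang set consists of a set with equivalence relation $(X,\sim)$ with $|\overline X|>2$ and, for each $x\in X$, a subgroup (root group) $U_x\le\mathrm{Sym}(X,\sim)$ such that: (LM0) if $x\sim y$ then $\overline{U_x}=\overline{U_y}$; (LM1) $U_x$ fixes $x$ and acts sharply transitively on $X\setminus\overline x$; (LM1') $\overline{U_x}$ fixes $\overline x$ and acts sharply transitively on $\overline X\setminus\{\overline x\}$; (LM2) $U_x^g=U_{xg}$ for all $x\in X$ and all $g$ in the little projective group $G:=\langle U_x\mid x\in X\rangle$. A basis is a pair $(0,\infty)$ of points of $X$ with $0\not\sim\infty$ (fixed). For $x\not\sim\infty$,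 $\alpha_x$ denotes the unique element of $U_\infty$ with $0\alpha_x=x$, and $-x:=0\alpha_x^{-1}$. A unit is a point $x\in X$ with $x\not\sim 0$ and $x\not\sim\infty$. *)

theory Defs
  imports Main
begin

text \<open>Permutations are HOL functions that are bijections of X and
  the identity outside X. Group actions are right actions: the point xg is
  written \<open>g x\<close>, so the product gh (first g, then h) is \<open>h \<circ> g\<close>, and the
  conjugate \<open>g^h = h\<inverse> g h\<close> is \<open>h \<circ> g \<circ> h\<inverse>\<close>.\<close>

definition perm_inv :: "'a set \<Rightarrow> ('a \<Rightarrow> 'a) \<Rightarrow> ('a \<Rightarrow> 'a)" where
  "perm_inv X g = (\<lambda>y. if y \<in> X then inv_into X g y else y)"

definition Sym_eq :: "'a set \<Rightarrow> 'a rel \<Rightarrow> ('a \<Rightarrow> 'a) set" where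
  "Sym_eq X R = {g. bij_betw g X X \<and> (\<forall>y. y \<notin> X \<longrightarrow> g y = y) \<and>
      (\<forall>x\<in>X. \<forall>y\<in>X. (x, y) \<in> R \<longleftrightarrow> (g x, g y) \<in> R)}"

definition is_subgroup :: "'a set \<Rightarrow> 'a rel \<Rightarrow> ('a \<Rightarrow> 'a) set \<Rightarrow> bool" where
  "is_subgroup X R U \<longleftrightarrow> U \<subseteq> Sym_eq X R \<and> id \<in> U \<and>
      (\<forall>g\<in>U. \<forall>h\<in>U. h \<circ> g \<in> U) \<and> (\<forall>g\<in>U. perm_inv X g \<in> U)"

definition induced :: "'a set \<Rightarrow> 'a rel \<Rightarrow> ('a \<Rightarrow> 'a) \<Rightarrow> ('a set \<Rightarrow> 'a set)" where
  "induced X R g = (\<lambda>C. if C \<in> X // R then g ` C else C)"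

definition induced_group :: "'a set \<Rightarrow> 'a rel \<Rightarrow> ('a \<Rightarrow> 'a) set \<Rightarrow> ('a set \<Rightarrow> 'a set) set" where
  "induced_group X R U = induced X R ` U"

inductive_set little_proj_group :: "'a set \<Rightarrow> ('a \<Rightarrow> ('a \<Rightarrow> 'a) set) \<Rightarrow> ('a \<Rightarrow> 'a) set"
  for X :: "'a set" and U :: "'a \<Rightarrow> ('a \<Rightarrow> 'a) set" where
  gen: "x \<in> X \<Longrightarrow> u \<in> U x \<Longrightarrow> u \<in> little_proj_group X U"
| one: "id \<in> little_proj_group X U"
| mult: "g \<in> little_proj_group X U \<Longrightarrow> h \<in> little_proj_group X U \<Longrightarrow> h \<circ> g \<in> little_proj_group X U"
| inverse: "g \<in> little_proj_group X U \<Longrightarrow> perm_inv X g \<in> little_proj_group X U"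

definition local_moufang_set :: "'a set \<Rightarrow> 'a rel \<Rightarrow> ('a \<Rightarrow> ('a \<Rightarrow> 'a) set) \<Rightarrow> bool" where
  "local_moufang_set X R U \<longleftrightarrow>
     equiv X R \<and>
     (infinite (X // R) \<or> 2 < card (X // R)) \<and>
     (\<forall>x\<in>X. is_subgroup X R (U x)) \<and>
     \<comment> \<open>(LM0)\<close>
     (\<forall>x\<in>X. \<forall>y\<in>X. (x, y) \<in> R \<longrightarrow> induced_group X R (U x) = induced_group X R (U y)) \<and>
     \<comment> \<open>(LM1)\<close>
     (\<forall>x\<in>X. (\<forall>u\<in>U x. u x = x) \<and>
        (\<forall>y\<in>X - R``{x}. \<forall>z\<in>X - R``{x}. \<exists>!u. u \<in> U x \<and> u y = z)) \<and>
     \<comment> \<open>(LM1')\<close>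
     (\<forall>x\<in>X. (\<forall>v\<in>induced_group X R (U x). v (R``{x}) = R``{x}) \<and>
        (\<forall>C\<in>X // R - {R``{x}}. \<forall>D\<in>X // R - {R``{x}}.
            \<exists>!v. v \<in> induced_group X R (U x) \<and> v C = D)) \<and>
     \<comment> \<open>(LM2)\<close>
     (\<forall>x\<in>X. \<forall>g\<in>little_proj_group X U.
        (\<lambda>u. g \<circ> u \<circ> perm_inv X g) ` U x = U (g x))"

text \<open>\<open>\<alpha>_x\<close>: the unique element of \<open>U_\<infinity>\<close> mapping 0 to x; \<open>-x = 0\<alpha>_x\<inverse>\<close>.\<close>
definition alpha :: "('a \<Rightarrow> ('a \<Rightarrow> 'a) set) \<Rightarrow> 'a \<Rightarrow> 'a \<Rightarrow> 'a \<Rightarrow> ('a \<Rightarrow> 'a)" where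
  "alpha U z w x = (THE a. a \<in> U w \<and> a z = x)"

definition neg :: "'a set \<Rightarrow> ('a \<Rightarrow> ('a \<Rightarrow> 'a) set) \<Rightarrow> 'a \<Rightarrow> 'a \<Rightarrow> 'a \<Rightarrow> 'a" where
  "neg X U z w x = perm_inv X (alpha U z w x) z"

definition double_coset :: "('a \<Rightarrow> 'a) set \<Rightarrow> ('a \<Rightarrow> 'a) \<Rightarrow> ('a \<Rightarrow> 'a) set" where
  "double_coset V a = {v \<circ> a \<circ> u | u v. u \<in> V \<and> v \<in> V}"

end

theory Submission
  imports Defs
begin

theorem mainTheorem3:
  fixes X :: "'a set" and R :: "'a rel" and U :: "'a \<Rightarrow> ('a \<Rightarrow> 'a) set"
    and z w x :: 'a
  assumes lm: "local_moufang_set X R U"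
    and basis: "z \<in> X" "w \<in> X" "(z, w) \<notin> R"
    and unit: "x \<in> X" "(x, z) \<notin> R" "(x, w) \<notin> R"
  shows "(\<exists>!\<mu>. \<mu> \<in> double_coset (U z) (alpha U z w x) \<and> \<mu> z = w \<and> \<mu> w = z) \<and>
         (let g = (THE g. g \<in> U z \<and> g w = neg X U z w x);
              h = (THE h. h \<in> U z \<and> h x = w)
          in (\<exists>!g'. g' \<in> U z \<and> g' w = neg X U z w x) \<and>
             (\<exists>!h'. h' \<in> U z \<and> h' x = w) \<and>
             (THE \<mu>. \<mu> \<in> double_coset (U z) (alpha U z w x) \<and> \<mu> z = w \<and> \<mu> w = z)
               = h \<circ> alpha U z w x \<circ> g \<and>
             g \<in> U z \<and> induced X R g \<noteq> id \<and>
             h \<in> U z \<and> induced X R h \<noteq> id)"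
proof -
  have eq: "equiv X R" using lm unfolding local_moufang_set_def by (elim conjE) assumption
  have L2: "\<forall>x\<in>X. is_subgroup X R (U x)" using lm unfolding local_moufang_set_def by (elim conjE) assumption
  have L3: "\<forall>x\<in>X. (\<forall>u\<in>U x. u x = x) \<and>
        (\<forall>y\<in>X - R``{x}. \<forall>z\<in>X - R``{x}. \<exists>!u. u \<in> U x \<and> u y = z)"
    using lm unfolding local_moufang_set_def by (elim conjE) assumption
  have sg: "\<And>y. y\<in>X \<Longrightarrow> is_subgroup X R (U y)" using L2 by blast
  have fx: "\<And>y u. y\<in>X \<Longrightarrow> u\<in>U y \<Longrightarrow> u y = y" using L3 by blast
  have st: "\<And>y a b. y\<in>X \<Longrightarrow> a\<in>X - R``{y} \<Longrightarrow> b \<in> X - R``{y} \<Longrightarrow> \<exists>!u. u\<in>U y \<and> u a = b"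
    using L3 by blast
  have symR: "\<And>a b. (a,b)\<in>R \<Longrightarrow> (b,a)\<in>R" using eq unfolding equiv_def sym_def by blast
  have reflR: "\<And>a. a\<in>X \<Longrightarrow> (a,a)\<in>R" using eq unfolding equiv_def refl_on_def by blast
  have SU: "\<And>y u. y\<in>X \<Longrightarrow> u \<in> U y \<Longrightarrow> u \<in> Sym_eq X R" using sg unfolding is_subgroup_def by blast
  have bijU: "\<And>y u. y\<in>X \<Longrightarrow> u \<in> U y \<Longrightarrow> bij_betw u X X" using SU unfolding Sym_eq_def by blast
  have presU: "\<And>y u a b. y\<in>X \<Longrightarrow> u \<in> U y \<Longrightarrow> a\<in>X \<Longrightarrow> b\<in>X \<Longrightarrow> (a,b)\<in>R \<Longrightarrow> (u a, u b) \<in> R"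
    using SU unfolding Sym_eq_def by blast
  have zn: "z \<in> X - R``{w}" using basis symR by blast
  have xn: "x \<in> X - R``{w}" using unit symR by blast
  obtain a where a: "a \<in> U w" "a z = x" and au: "\<And>b. b \<in> U w \<Longrightarrow> b z = x \<Longrightarrow> b = a"
    using st[OF basis(2) zn xn] by blast
  have aeq: "alpha U z w x = a" unfolding alpha_def apply (rule the_equality) using a apply blast using au by blast
  have abij: "bij_betw a X X" using bijU[OF basis(2) a(1)] .
  define m where "m = inv_into X a z"
  have mX: "m \<in> X" unfolding m_def using abij basis(1)
    by (metis bij_betw_def inv_into_into)
  have am: "a m = z" unfolding m_def using abij basis(1)
    by (metis bij_betw_def f_inv_into_f)
  have negm: "neg X U z w x = m" by (simp add: neg_def perm_inv_def aeq m_def basis)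
  have aw: "a w = w" using fx[OF basis(2) a(1)] .
  have mz: "(m,z)\<notin>R"
  proof
    assume "(m,z)\<in>R"
    then have "(a m, a z) \<in> R" using presU[OF basis(2) a(1) mX basis(1)] by blast
    then show False using am a(2) unit symR by auto
  qed
  have mw: "(m,w)\<notin>R"
  proof
    assume "(m,w)\<in>R"
    then have "(a m, a w) \<in> R" using presU[OF basis(2) a(1) mX basis(2)] by blast
    then show False using am aw basis by auto
  qed
  have wn: "w \<in> X - R``{z}" using basis by blast
  have mn: "m \<in> X - R``{z}" using mX mz symR by blast
  have xn2: "x \<in> X - R``{z}" using unit symR by blast
  obtain g where g: "g \<in> U z" "g w = m" and gu: "\<And>b. b \<in> U z \<Longrightarrow> b w = m \<Longrightarrow> b = g"
    using st[OF basis(1) wn mn] by blast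
  obtain h where h: "h \<in> U z" "h x = w" and hu: "\<And>b. b \<in> U z \<Longrightarrow> b x = w \<Longrightarrow> b = h"
    using st[OF basis(1) xn2 wn] by blast
  have geq: "(THE g. g \<in> U z \<and> g w = m) = g" apply (rule the_equality) using g apply blast using gu by blast
  have heq: "(THE h. h \<in> U z \<and> h x = w) = h" apply (rule the_equality) using h apply blast using hu by blast
  have gz: "g z = z" using fx[OF basis(1) g(1)] .
  have hz: "h z = z" using fx[OF basis(1) h(1)] .
  have hbij: "bij_betw h X X" using bijU[OF basis(1) h(1)] .
  define P where "P = (\<lambda>\<mu>. \<mu> \<in> double_coset (U z) a \<and> \<mu> z = w \<and> \<mu> w = z)"
  have Ph: "P (h \<circ> a \<circ> g)"
    unfolding P_def double_coset_def using g h a gz hz am aw by auto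
  have Pu: "\<mu> = h \<circ> a \<circ> g" if "P \<mu>" for \<mu>
  proof -
    from that obtain u v where uv: "u \<in> U z" "v \<in> U z" "\<mu> = v \<circ> a \<circ> u"
      and m1: "\<mu> z = w" and m2: "\<mu> w = z" unfolding P_def double_coset_def by blast
    have uz: "u z = z" using fx[OF basis(1) uv(1)] .
    have "v x = w" using m1 uv(3) uz a(2) by simp
    then have vh: "v = h" using hu uv(2) by blast
    have uwX: "u w \<in> X" using bijU[OF basis(1) uv(1)] basis(2) by (meson bij_betwE)
    have auwX: "a (u w) \<in> X" using abij uwX by (meson bij_betwE)
    have "h (a (u w)) = h z" using m2 uv(3) vh hz by simp
    then have "a (u w) = z" using hbij auwX basis(1) unfolding bij_betw_def inj_on_def by blast
    then have "u w = m" using am abij uwX mX unfolding bij_betw_def inj_on_def by metis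
    then have "u = g" using gu uv(1) by blast
    then show ?thesis using uv(3) vh by simp
  qed
  have ex1: "\<exists>!\<mu>. P \<mu>" using Ph Pu by (intro ex1I)
  have theq: "(THE \<mu>. P \<mu>) = h \<circ> a \<circ> g" using Ph Pu by (intro the_equality)
  have ig: "induced X R g \<noteq> id"
  proof
    assume A: "induced X R g = id"
    have C: "R``{w} \<in> X // R" using basis(2) by (rule quotientI)
    have "g ` (R``{w}) = R``{w}" using fun_cong[OF A, of "R``{w}"] C unfolding induced_def by simp
    moreover have "w \<in> R``{w}" using reflR basis(2) by blast
    ultimately have "g w \<in> R``{w}" by blast
    then show False using g(2) mw symR by blast
  qed
  have ih: "induced X R h \<noteq> id"
  proof
    assume A: "induced X R h = id"
    have C: "R``{x} \<in> X // R" using unit(1) by (rule quotientI)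
    have "h ` (R``{x}) = R``{x}" using fun_cong[OF A, of "R``{x}"] C unfolding induced_def by simp
    moreover have "x \<in> R``{x}" using reflR unit(1) by blast
    ultimately have "h x \<in> R``{x}" by blast
    then show False using h(2) unit symR by blast
  qed
  show ?thesis
    unfolding Let_def negm aeq geq heq P_def[symmetric]
  proof (intro conjI)
    show "\<exists>!g'. g' \<in> U z \<and> g' w = m" apply (rule ex1I[of _ g]) using g apply blast using gu by blast
    show "\<exists>!h'. h' \<in> U z \<and> h' x = w" apply (rule ex1I[of _ h]) using h apply blast using hu by blast
  qed (use ex1 theq g h ig ih in auto)
qed

end
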